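(* In the setting below, under the tight disturbance bound assumption and the persistent excitation assumption, the minimal parameter set $\Theta_t=\Theta_0\cap\bigcap_{j=1}^t\Delta_j$ converges to $\{\theta^\ast\}$ with probability 1; that is, with probability 1, $\bigcap_{t\ge0}\Theta_t=\{\theta^\ast\}$.
   Context: Setting: $\theta^\ast\in\mathbb{R}^p$ is a fixed (unknown) parameter vector. $\Theta_0\subset\mathbb{R}^p$ is a compact convex polytope containing $\theta^\ast$. $\mathcal{W}=\{w\in\mathbb{R}^{n_x}:\Pi_w w\le\pi_w\}$ is a compact convex polytope with $\pi_w>0$. The disturbances $w_0,w_1,\dots$ are independent random vectors with $w_t\in\mathcal{W}$ for all $t$. $D_0,D_1,\dots\in\mathbb{R}^{n_x\times p}$ is a given (non-random) sequence of regressor matrices. For $t\ge1$ the (random) unfalsified parameter set is $\Delta_t=\{\theta\in\mathbb{R}^p: D_{t-1}(\theta^\ast-\theta)+w_{t-1}\in\mathcal{W}\}$. $\|\cdot\|$ is the Euclidean norm (induced 2-norm for matrices); $\partial\mathcal{W}$ is the boundary of $\mathcal{W}$. Tight disturbance bound assumption: there is a function $p_w:(0,\infty)\to(0,1]$ such that for all $w^0\in\partial\mathcal{W}$, all $\epsilon>0$ and all $t\ge0$, $\Pr\{\|w_t-w^0\|<\epsilon\}\ge p_w(\epsilon)$. Persistent excitation assumption: there exist $\tau>0$, $\beta>0$ and an integer $N_u\ge\lceil p/n_x\rceil$ such that for every $t\ge0$, $\|D_t\|\le\tau$ and $\sum_{j=t}^{t+N_u-1}D_j^\top D_j\succeq\beta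 I$. *)

theory Defs
  imports "HOL-Probability.Probability"
begin

definition poly_set :: "real^'n^'m \<Rightarrow> real^'m \<Rightarrow> (real^'n) set" where
  "poly_set Pw pw = {w. \<forall>i. (Pw *v w) $ i \<le> pw $ i}"

definition unfalsified_set ::
  "(nat \<Rightarrow> real^'p^'n) \<Rightarrow> ('a \<Rightarrow> nat \<Rightarrow> real^'n) \<Rightarrow> (real^'n) set \<Rightarrow> real^'p
    \<Rightarrow> nat \<Rightarrow> 'a \<Rightarrow> (real^'p) set" where
  "unfalsified_set D w W thetastar t x =
     {theta. D (t - 1) *v (thetastar - theta) + w x (t - 1) \<in> W}"

definition min_param_set ::
  "(real^'p) set \<Rightarrow> (nat \<Rightarrow> real^'p^'n) \<Rightarrow> ('a \<Rightarrow> nat \<Rightarrow> real^'n) \<Rightarrow> (real^'n) set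
    \<Rightarrow> real^'p \<Rightarrow> nat \<Rightarrow> 'a \<Rightarrow> (real^'p) set" where
  "min_param_set Theta0 D w W thetastar t x =
     Theta0 \<inter> (\<Inter>j\<in>{1..t}. unfalsified_set D w W thetastar j x)"

end

theory Submission imports Defs begin

lemma prob_core:
  fixes w :: "'a \<Rightarrow> nat \<Rightarrow> real^'n" and c :: "nat \<Rightarrow> real^'n"
  assumes P: "prob_space M"
    and ind: "prob_space.indep_vars M (\<lambda>_. borel) (\<lambda>t x. w x t) UNIV"
    and meas: "\<And>t. (\<lambda>x. w x t) \<in> borel_measurable M"
    and J: "infinite J" and p: "p > 0"
    and pr: "\<And>j. j \<in> J \<Longrightarrow> measure M {x \<in> space M. norm (w x j - c j) < e} \<ge> p"
  shows "AE x in M. \<exists>j\<in>J. norm (w x j - c j) < e"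
proof -
  interpret prob_space M by (rule P)
  define A where "A j = (\<lambda>x. w x j) -` {y. e \<le> norm (y - c j)} \<inter> space M" for j
  have closedj: "closed {y::real^'n. e \<le> norm (y - c j)}" for j
    by (intro closed_Collect_le continuous_intros)
  have Aev: "A j \<in> events" for j
    unfolding A_def using meas[of j] closedj[of j] by (auto intro: measurable_sets borel_closed)
  have Ac: "A j = space M - {x \<in> space M. norm (w x j - c j) < e}" for j
    unfolding A_def by auto
  have probA: "prob (A j) \<le> 1 - p" if "j \<in> J" for j
  proof -
    have "{x \<in> space M. norm (w x j - c j) < e} \<in> events"
    proof -
      have "{x \<in> space M. norm (w x j - c j) < e} = space M - A j" unfolding A_def by auto
      thus ?thesis using Aev[of j] by auto
    qed
    then have "prob (A j) = 1 - prob {x \<in> space M. norm (w x j - c j) < e}"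
      unfolding Ac by (rule prob_compl)
    thus ?thesis using pr[OF that] by simp
  qed
  from ind have isets: "indep_sets (\<lambda>i. {(\<lambda>x. w x i) -` S \<inter> space M | S. S \<in> sets borel}) UNIV"
    unfolding indep_vars_def2 by auto
  define B where "B = {x \<in> space M. \<not> (\<exists>j\<in>J. norm (w x j - c j) < e)}"
  have Bint: "B = space M \<inter> (\<Inter>j\<in>J. A j)" unfolding B_def A_def by (auto simp: not_less)
  have Bev: "B \<in> events"
  proof -
    have "countable J" by simp
    have "B = (if J = {} then space M else (\<Inter>j\<in>J. A j))"
      using Bint Aev sets.sets_into_space by auto
    thus ?thesis using Aev by (auto intro!: sets.countable_INT')
  qed
  have bound: "prob B \<le> (1 - p) ^ n" if "n > 0" for n
  proof -
    obtain F where F: "finite F" "card F = n" "F \<subseteq> J" using infinite_arbitrarily_large[OF J] by blast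
    have Fne: "F \<noteq> {}" using F that by auto
    have "B \<subseteq> (\<Inter>j\<in>F. A j)" using Bint F Fne by auto
    hence "prob B \<le> prob (\<Inter>j\<in>F. A j)"
      using Fne Aev by (intro finite_measure_mono) (auto intro!: sets.finite_INT F)
    also have "prob (\<Inter>j\<in>F. A j) = (\<Prod>j\<in>F. prob (A j))"
    proof -
      have "A \<in> Pi F (\<lambda>i. {(\<lambda>x. w x i) -` S \<inter> space M | S. S \<in> sets borel})"
      proof
        fix j assume "j \<in> F"
        show "A j \<in> {(\<lambda>x. w x j) -` S \<inter> space M | S. S \<in> sets borel}"
          unfolding A_def by (rule CollectI, rule exI[of _ "{y. e \<le> norm (y - c j)}"], rule conjI[OF refl], rule borel_closed[OF closedj])
      qed
      thus ?thesis using F Fne by (intro indep_setsD[OF isets]) (auto simp: Pi_iff)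
    qed
    also have "\<dots> \<le> (\<Prod>j\<in>F. 1 - p)"
      using probA F by (intro prod_mono) auto
    also have "\<dots> = (1 - p) ^ n" using F by simp
    finally show ?thesis .
  qed
  have "prob B = 0"
  proof (rule ccontr)
    assume "prob B \<noteq> 0"
    hence pos: "prob B > 0" using measure_nonneg[of M B] by linarith
    obtain n where n: "(1 - p) ^ n < prob B" using real_arch_pow_inv[OF pos, of "1-p"] p by auto
    have "n > 0" using n prob_le_1[of B] by (cases n) auto
    with bound[of n] n show False by linarith
  qed
  then show ?thesis
    using Bev by (subst AE_iff_measurable[OF Bev]) (auto simp: B_def emeasure_eq_measure)
qed
lemma sup_frontier:
  fixes W :: "(real^'n) set"
  assumes "compact W" "W \<noteq> {}" "u \<noteq> 0"
  shows "\<exists>w0\<in>frontier W. \<forall>w\<in>W. u \<bullet> w \<le> u \<bullet> w0"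
proof -
  have "compact ((\<lambda>w. u \<bullet> w) ` W)"
    using assms(1) by (intro compact_continuous_image continuous_intros)
  then obtain s where s: "s \<in> (\<lambda>w. u \<bullet> w) ` W" "\<forall>t\<in>(\<lambda>w. u \<bullet> w) ` W. t \<le> s"
    using compact_attains_sup assms(2) by blast
  then obtain w0 where w0: "w0 \<in> W" "\<forall>w\<in>W. u \<bullet> w \<le> u \<bullet> w0" by auto
  have "w0 \<notin> interior W"
  proof
    assume "w0 \<in> interior W"
    then obtain e where e: "e > 0" "ball w0 e \<subseteq> W" using mem_interior by blast
    define z where "z = w0 + (e / (2 * norm u)) *\<^sub>R u"
    have nu: "norm u > 0" using assms(3) by simp
    have "dist w0 z = e / 2" unfolding z_def dist_norm using nu e by (simp add: norm_minus_commute)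
    hence "z \<in> W" using e by auto
    hence "u \<bullet> z \<le> u \<bullet> w0" using w0 by auto
    moreover have "u \<bullet> z = u \<bullet> w0 + (e / (2 * norm u)) * (u \<bullet> u)"
      unfolding z_def by (simp add: inner_add_right)
    moreover have "(e / (2 * norm u)) * (u \<bullet> u) > 0" using nu e assms(3) by simp
    ultimately show False by linarith
  qed
  moreover have "closure W = W" using assms(1) compact_imp_closed closure_closed by blast
  ultimately show ?thesis using w0 unfolding frontier_def by auto
qed

lemma exclusion:
  fixes W :: "(real^'n) set"
  assumes R: "\<forall>w\<in>W. norm w \<le> R" and w0: "w0 \<in> W" "\<forall>w\<in>W. u \<bullet> w \<le> u \<bullet> w0"
    and near: "norm (wj - w0) \<le> e"
    and big: "norm u' * (norm u' - e) > 2 * norm (u' - u) * R"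
  shows "wj + u' \<notin> W"
proof
  assume wW: "wj + u' \<in> W"
  have bnd: "u' \<bullet> w \<le> u' \<bullet> w0 + 2 * norm (u' - u) * R" if "w \<in> W" for w
  proof -
    have "u' \<bullet> w = u \<bullet> w + (u' - u) \<bullet> w" by (simp add: inner_diff_left)
    also have "(u' - u) \<bullet> w \<le> norm (u' - u) * R"
    proof -
      have "norm (u' - u) * norm w \<le> norm (u' - u) * R" using R that by (simp add: mult_left_mono)
      thus ?thesis using Cauchy_Schwarz_ineq2[of "u' - u" w] by linarith
    qed
    moreover have "u \<bullet> w \<le> u \<bullet> w0" using w0 that by auto
    moreover have "u \<bullet> w0 = u' \<bullet> w0 + (u - u') \<bullet> w0" by (simp add: inner_diff_left)
    moreover have "(u - u') \<bullet> w0 \<le> norm (u' - u) * R"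
    proof -
      have "norm (u' - u) * norm w0 \<le> norm (u' - u) * R" using R w0 by (simp add: mult_left_mono)
      thus ?thesis using Cauchy_Schwarz_ineq2[of "u - u'" w0] by (simp add: norm_minus_commute)
    qed
    ultimately show ?thesis by linarith
  qed
  have "u' \<bullet> (wj + u') = u' \<bullet> w0 + u' \<bullet> (wj - w0) + norm u' * norm u'"
    by (simp add: inner_add_right inner_diff_right flip: power2_norm_eq_inner power2_eq_square)
  moreover have "u' \<bullet> (wj - w0) \<ge> - (norm u' * e)"
  proof -
    have "\<bar>u' \<bullet> (wj - w0)\<bar> \<le> norm u' * norm (wj - w0)" by (rule Cauchy_Schwarz_ineq2)
    also have "\<dots> \<le> norm u' * e" using near by (simp add: mult_left_mono)
    finally show ?thesis by linarith
  qed
  ultimately have "u' \<bullet> (wj + u') > u' \<bullet> w0 + 2 * norm (u' - u) * R"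
    using big by (simp add: algebra_simps)
  with bnd[OF wW] show False by linarith
qed

lemma quad_sum:
  fixes D :: "nat \<Rightarrow> real^'p^'n"
  shows "v \<bullet> ((\<Sum>j\<in>S. transpose (D j) ** D j) *v v) = (\<Sum>j\<in>S. norm (D j *v v) ^ 2)"
proof (induction S rule: infinite_finite_induct)
  case (insert x F)
  have "v \<bullet> ((transpose (D x) ** D x) *v v) = norm (D x *v v) ^ 2"
    by (simp add: power2_norm_eq_inner flip: matrix_vector_mul_assoc)
       (metis dot_lmul_matrix inner_commute)
  then show ?case using insert by (simp add: matrix_vector_mult_add_rdistrib inner_add_right)
qed auto

lemma window:
  fixes D :: "nat \<Rightarrow> real^'p^'n"
  assumes H: "v \<bullet> ((\<Sum>j\<in>{t..<t+Nu}. transpose (D j) ** D j) *v v) \<ge> \<beta> * (v \<bullet> v)"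
    and b: "\<beta> > 0" and v: "v \<noteq> 0" and N: "Nu > 0"
  shows "\<exists>j\<in>{t..<t+Nu}. norm (D j *v v) ^ 2 \<ge> \<beta> * (v \<bullet> v) / Nu"
proof (rule ccontr)
  assume "\<not> ?thesis"
  hence lt: "\<And>j. j \<in> {t..<t+Nu} \<Longrightarrow> norm (D j *v v) ^ 2 < \<beta> * (v \<bullet> v) / Nu" by (auto simp: not_le)
  have "(\<Sum>j\<in>{t..<t+Nu}. norm (D j *v v) ^ 2) < (\<Sum>j\<in>{t..<t+Nu}. \<beta> * (v \<bullet> v) / Nu)"
    using N by (intro sum_strict_mono lt) auto
  also have "\<dots> = \<beta> * (v \<bullet> v)" using N by simp
  finally show False using H quad_sum[of v D "{t..<t+Nu}"] by linarith
qed

lemma Nu_pos: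
  fixes D :: "nat \<Rightarrow> real^'p^'n"
  assumes H: "\<forall>v. v \<bullet> ((\<Sum>j\<in>{t..<t+Nu}. transpose (D j) ** D j) *v v) \<ge> \<beta> * (v \<bullet> v)"
    and b: "\<beta> > 0"
  shows "Nu > 0"
proof (rule ccontr)
  assume "\<not> Nu > 0"
  hence "Nu = 0" by simp
  moreover have "(axis undefined (1::real) :: real^'p) \<noteq> 0" by (simp add: axis_eq_0_iff)
  ultimately show False using H[rule_format, of "axis undefined 1"] b by simp
qed

theorem corollary2:
  fixes M :: "'a measure"
    and w :: "'a \<Rightarrow> nat \<Rightarrow> real^'n"
    and D :: "nat \<Rightarrow> real^'p^'n"
    and Theta0 :: "(real^'p) set"
    and thetastar :: "real^'p"
    and Pw :: "real^'n^'m" and pw :: "real^'m"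
  assumes "prob_space M"
    and Theta0: "polytope Theta0" "thetastar \<in> Theta0"
    and W_compact: "compact (poly_set Pw pw)"
    and pw_pos: "\<forall>i. pw $ i > 0"
    and w_meas: "\<And>t. (\<lambda>x. w x t) \<in> borel_measurable M"
    and w_indep: "prob_space.indep_vars M (\<lambda>_. borel) (\<lambda>t x. w x t) UNIV"
    and w_in_W: "\<And>t x. x \<in> space M \<Longrightarrow> w x t \<in> poly_set Pw pw"
    and tight: "\<exists>p_w :: real \<Rightarrow> real. (\<forall>\<epsilon>>0. 0 < p_w \<epsilon> \<and> p_w \<epsilon> \<le> 1) \<and>
       (\<forall>w0\<in>frontier (poly_set Pw pw). \<forall>\<epsilon>>0. \<forall>t.
          measure M {x \<in> space M. norm (w x t - w0) < \<epsilon>} \<ge> p_w \<epsilon>)"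
    and PE: "\<exists>\<tau>>0. \<exists>\<beta>>0. \<exists>Nu::nat.
       real Nu \<ge> of_int \<lceil>real CARD('p) / real CARD('n)\<rceil> \<and>
       (\<forall>t. onorm (\<lambda>v. D t *v v) \<le> \<tau> \<and>
          (\<forall>v. v \<bullet> ((\<Sum>j\<in>{t..<t+Nu}. transpose (D j) ** D j) *v v) \<ge> \<beta> * (v \<bullet> v)))"
  shows "AE x in M. (\<Inter>t. min_param_set Theta0 D w (poly_set Pw pw) thetastar t x) = {thetastar}"
proof -
  interpret prob_space M by (rule assms(1))
  define W where "W = poly_set Pw pw"
  have cW: "compact W" using W_compact W_def by simp
  have zW: "0 \<in> W" using pw_pos unfolding W_def poly_set_def by (simp add: less_imp_le)
  have fW: "frontier W \<subseteq> W" using cW by (simp add: compact_imp_closed frontier_subset_closed)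
  obtain R where R: "\<forall>w\<in>W. norm w \<le> R" using compact_imp_bounded[OF cW] bounded_iff by auto
  have R0: "R \<ge> 0" using R zW by force
  obtain p_w :: "real \<Rightarrow> real" where pw1: "\<forall>\<epsilon>>0. 0 < p_w \<epsilon> \<and> p_w \<epsilon> \<le> 1"
    and pw2: "\<forall>w0\<in>frontier W. \<forall>\<epsilon>>0. \<forall>t. measure M {x \<in> space M. norm (w x t - w0) < \<epsilon>} \<ge> p_w \<epsilon>"
    using tight W_def by auto
  obtain \<tau> \<beta> Nu where tb: "\<tau> > 0" "\<beta> > 0"
    and PE': "\<forall>t. onorm (\<lambda>v. D t *v v) \<le> \<tau> \<and>
          (\<forall>v. v \<bullet> ((\<Sum>j\<in>{t..<t+Nu}. transpose (D j) ** D j) *v v) \<ge> \<beta> * (v \<bullet> v))"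
    using PE by auto
  have Nu0: "Nu > 0" using Nu_pos[where t=0 and Nu=Nu and D=D and \<beta>=\<beta>] PE'[rule_format, of 0] tb by simp
  have Dbound: "norm (D t *v y) \<le> \<tau> * norm y" for t y
  proof -
    have "norm (D t *v y) \<le> onorm (\<lambda>v. D t *v v) * norm y"
      by (rule onorm) simp
    also have "\<dots> \<le> \<tau> * norm y" using PE' by (simp add: mult_right_mono)
    finally show ?thesis .
  qed
  have key: "\<exists>\<rho>>0. \<forall>\<theta>. r \<le> norm (thetastar - \<theta>) \<longrightarrow>
      (AE x in M. \<forall>\<theta>'\<in>ball \<theta> \<rho>. \<exists>j. D j *v (thetastar - \<theta>') + w x j \<notin> W)" if r0: "r > 0" for r
  proof -
    define s0 where "s0 = sqrt (\<beta> * r^2 / Nu)"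
    have s0: "s0 > 0" unfolding s0_def using tb r0 Nu0 by simp
    have s0sq: "s0^2 = \<beta> * r^2 / Nu" unfolding s0_def using tb Nu0 by simp
    define \<rho> where "\<rho> = min (s0/(2*\<tau>)) (s0^2/(32*\<tau>*(R+1)))"
    have \<rho>: "\<rho> > 0" unfolding \<rho>_def using s0 tb R0 by simp
    have tr1: "\<tau> * \<rho> \<le> s0/2"
    proof -
      have "\<rho> \<le> s0/(2*\<tau>)" unfolding \<rho>_def by simp
      thus ?thesis using tb by (simp add: field_simps)
    qed
    have tr2: "\<tau> * \<rho> * (R+1) \<le> s0^2/32"
    proof -
      have "\<rho> \<le> s0^2/(32*\<tau>*(R+1))" unfolding \<rho>_def by simp
      moreover have "32*\<tau>*(R+1) > 0" using tb R0 by simp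
      ultimately have "\<rho> * (32*\<tau>*(R+1)) \<le> s0^2" by (simp add: le_divide_eq)
      thus ?thesis by (simp add: algebra_simps)
    qed
    show ?thesis
    proof (intro exI[of _ \<rho>] conjI allI impI)
      show "\<rho> > 0" by (rule \<rho>)
      fix \<theta> assume r\<theta>: "r \<le> norm (thetastar - \<theta>)"
      define v where "v = thetastar - \<theta>"
      have vne: "v \<noteq> 0" using r\<theta> r0 v_def by auto
      define J where "J = {j. s0 \<le> norm (D j *v v)}"
      have Jinf: "infinite J" unfolding infinite_nat_iff_unbounded_le
      proof
        fix m
        obtain j where j: "j \<in> {m..<m+Nu}" "norm (D j *v v)^2 \<ge> \<beta>*(v \<bullet> v)/Nu"
        proof -
          have "v \<bullet> ((\<Sum>j\<in>{m..<m+Nu}. transpose (D j) ** D j) *v v) \<ge> \<beta> * (v \<bullet> v)"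
            using conjunct2[OF spec[OF PE', of m]] by (rule spec)
          from window[OF this tb(2) vne Nu0] show ?thesis using that by blast
        qed
        have "r^2 \<le> v \<bullet> v" using r\<theta> r0 v_def by (simp add: power_mono flip: power2_norm_eq_inner)
        hence "\<beta> * r^2 / Nu \<le> \<beta>*(v \<bullet> v)/Nu" using tb Nu0 by (simp add: divide_right_mono)
        hence "s0^2 \<le> norm (D j *v v)^2" using j s0sq by linarith
        hence "s0 \<le> norm (D j *v v)" by (rule power2_le_imp_le) simp
        thus "\<exists>n\<ge>m. n \<in> J" using j J_def by auto
      qed
      define c where "c j = (SOME w0. w0 \<in> frontier W \<and> (\<forall>w\<in>W. (D j *v v) \<bullet> w \<le> (D j *v v) \<bullet> w0))" for j
      have c: "c j \<in> frontier W \<and> (\<forall>w\<in>W. (D j *v v) \<bullet> w \<le> (D j *v v) \<bullet> c j)" if "j \<in> J" for j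
      proof -
        have "D j *v v \<noteq> 0" using that J_def s0 by auto
        have ne: "W \<noteq> {}" using zW by blast
        have "\<exists>w0. w0 \<in> frontier W \<and> (\<forall>w\<in>W. (D j *v v) \<bullet> w \<le> (D j *v v) \<bullet> w0)"
          using sup_frontier[OF cW ne \<open>D j *v v \<noteq> 0\<close>] by (simp only: Bex_def)
        from someI_ex[OF this] show ?thesis unfolding c_def .
      qed
      have AEj: "AE x in M. \<exists>j\<in>J. norm (w x j - c j) < s0/4"
      proof (rule prob_core[OF assms(1) w_indep w_meas Jinf, of "p_w (s0/4)"])
        show "0 < p_w (s0/4)" using pw1 s0 by simp
        fix j assume "j \<in> J"
        hence cj: "c j \<in> frontier W" using c by blast
        have "s0/4 > 0" using s0 by simp
        then show "p_w (s0/4) \<le> measure M {x \<in> space M. norm (w x j - c j) < s0/4}"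
          using pw2 cj by blast
      qed
      show "AE x in M. \<forall>\<theta>'\<in>ball \<theta> \<rho>. \<exists>j. D j *v (thetastar - \<theta>') + w x j \<notin> W"
        using AEj
      proof eventually_elim
        case (elim x)
        then obtain j where j: "j \<in> J" "norm (w x j - c j) < s0/4" by auto
        show ?case
        proof
          fix \<theta>' assume \<theta>': "\<theta>' \<in> ball \<theta> \<rho>"
          define u where "u = D j *v v"
          define u' where "u' = D j *v (thetastar - \<theta>')"
          have "u' - u = D j *v (\<theta> - \<theta>')"
            unfolding u_def u'_def v_def by (simp add: matrix_vector_mult_diff_distrib)
          hence "norm (u' - u) \<le> \<tau> * norm (\<theta> - \<theta>')" using Dbound by simp
          also have "\<dots> \<le> \<tau> * \<rho>" using \<theta>' tb by (simp add: dist_norm mult_left_mono less_imp_le)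
          finally have du: "norm (u' - u) \<le> \<tau> * \<rho>" .
          have nu: "norm u \<ge> s0" using j J_def u_def by auto
          have "norm u \<le> norm u' + norm (u' - u)" using norm_triangle_ineq[of u' "u - u'"] by (simp add: norm_minus_commute)
          hence nu': "norm u' \<ge> s0/2" using nu du tr1 by linarith
          have "(s0/2) * (s0/4) \<le> norm u' * (norm u' - s0/4)"
            using nu' s0 by (intro mult_mono) auto
          moreover have "2 * norm (u' - u) * R \<le> 2 * (\<tau> * \<rho>) * R"
            using du R0 by (simp add: mult_right_mono)
          moreover have "2 * (\<tau> * \<rho>) * R < (s0/2) * (s0/4)"
          proof -
            have "2 * (\<tau> * \<rho>) * R \<le> 2 * (\<tau> * \<rho> * (R+1))" using tb \<rho> by (simp add: algebra_simps)
            also have "\<dots> \<le> s0^2/16" using tr2 by simp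
            also have "\<dots> < (s0/2) * (s0/4)" using s0 by (simp add: power2_eq_square)
            finally show ?thesis .
          qed
          ultimately have big: "norm u' * (norm u' - s0/4) > 2 * norm (u' - u) * R" by linarith
          have "w x j + u' \<notin> W"
            using exclusion[OF R, of "c j" u "w x j" "s0/4" u'] c[OF j(1)] fW j(2) big u_def by auto
          thus "\<exists>j. D j *v (thetastar - \<theta>') + w x j \<notin> W" unfolding u'_def by (auto simp: add.commute)
        qed
      qed
    qed
  qed
  have main: "AE x in M. \<forall>n::nat. \<forall>\<theta>\<in>Theta0. inverse (real (Suc n)) \<le> norm (thetastar - \<theta>) \<longrightarrow>
      (\<exists>j. D j *v (thetastar - \<theta>) + w x j \<notin> W)"
    unfolding AE_all_countable
  proof
    fix n :: nat
    define r where "r = inverse (real (Suc n))"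
    have r0: "r > 0" unfolding r_def by simp
    obtain \<rho> where \<rho>: "\<rho> > 0" "\<forall>\<theta>. r \<le> norm (thetastar - \<theta>) \<longrightarrow>
      (AE x in M. \<forall>\<theta>'\<in>ball \<theta> \<rho>. \<exists>j. D j *v (thetastar - \<theta>') + w x j \<notin> W)"
      using key[OF r0] by blast
    define K where "K = Theta0 \<inter> {\<theta>. r \<le> norm (thetastar - \<theta>)}"
    have cK: "compact K" unfolding K_def
      using polytope_imp_compact[OF Theta0(1)] by (intro compact_Int_closed closed_Collect_le continuous_intros)
    have cov: "K \<subseteq> (\<Union>\<theta>\<in>K. ball \<theta> \<rho>)" using \<rho>(1) by auto
    obtain F where F: "F \<subseteq> K" "finite F" "K \<subseteq> (\<Union>\<theta>\<in>F. ball \<theta> \<rho>)"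
      using compactE_image[OF cK _ cov] by blast
    have "AE x in M. \<forall>\<theta>\<in>F. \<forall>\<theta>'\<in>ball \<theta> \<rho>. \<exists>j. D j *v (thetastar - \<theta>') + w x j \<notin> W"
      by (rule AE_finite_allI[OF F(2)]) (use \<rho> F K_def in auto)
    then show "AE x in M. \<forall>\<theta>\<in>Theta0. inverse (real (Suc n)) \<le> norm (thetastar - \<theta>) \<longrightarrow>
      (\<exists>j. D j *v (thetastar - \<theta>) + w x j \<notin> W)"
    proof eventually_elim
      case (elim x)
      show ?case
      proof (intro ballI impI)
        fix \<theta> assume "\<theta> \<in> Theta0" "inverse (real (Suc n)) \<le> norm (thetastar - \<theta>)"
        hence "\<theta> \<in> K" unfolding K_def r_def by auto
        then obtain \<theta>0 where "\<theta>0 \<in> F" "\<theta> \<in> ball \<theta>0 \<rho>" using F(3) by auto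
        thus "\<exists>j. D j *v (thetastar - \<theta>) + w x j \<notin> W" using elim by auto
      qed
    qed
  qed
  show ?thesis
    using main AE_space
  proof eventually_elim
    case (elim x)
    show ?case
    proof (rule set_eqI, rule iffI)
      fix \<theta> assume th: "\<theta> \<in> (\<Inter>t. min_param_set Theta0 D w (poly_set Pw pw) thetastar t x)"
      have "\<theta> \<in> min_param_set Theta0 D w (poly_set Pw pw) thetastar 0 x" using th by blast
      hence th0: "\<theta> \<in> Theta0" by (simp add: min_param_set_def)
      have thj: "D j *v (thetastar - \<theta>) + w x j \<in> W" for j
      proof -
        have "\<theta> \<in> min_param_set Theta0 D w (poly_set Pw pw) thetastar (Suc j) x" using th by auto
        thus ?thesis unfolding min_param_set_def unfalsified_set_def W_def
          by (auto dest!: bspec[where x="Suc j"])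
      qed
      show "\<theta> \<in> {thetastar}"
      proof (rule ccontr)
        assume "\<theta> \<notin> {thetastar}"
        hence "norm (thetastar - \<theta>) > 0" by auto
        then obtain n where "inverse (real (Suc n)) < norm (thetastar - \<theta>)"
          using reals_Archimedean by blast
        then show False using elim th0 thj by (meson less_imp_le)
      qed
    next
      fix \<theta> assume "\<theta> \<in> {thetastar}"
      then show "\<theta> \<in> (\<Inter>t. min_param_set Theta0 D w (poly_set Pw pw) thetastar t x)"
        using Theta0(2) w_in_W elim by (auto simp: min_param_set_def unfalsified_set_def)
    qed
  qed
qed

end
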